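(* Let $q$ be a prime power and let $X$ be any polarity graph of the generalized quadrangle $W(q)$ (loops at absolute points retained). Then every independent set $S$ of $X$ satisfies \[ |S|\le \frac{\sqrt{2q}+\sqrt{2q+4(q^2+1)\frac{q+\sqrt{2q}+1}{q^3+q^2+q+1}}}{2\,\frac{q+\sqrt{2q}+1}{q^3+q^2+q+1}}. \]
   Context: $W(q)$ is the symplectic generalized quadrangle: its points are the $q^3+q^2+q+1$ points of $PG(3,q)$ and its lines are the $q^3+q^2+q+1$ lines of $PG(3,q)$ that are totally isotropic for a fixed nondegenerate alternating form, with incidence being containment; each point lies on $q+1$ lines, each line has $q+1$ points. A polarity is an incidence-preserving bijection $\sigma$ mapping points to lines and lines to points with $\sigma^2$ the identity. The polarity graph has the points as vertices, with $x$ adjacent to $y$ iff $x$ is incident with $\sigma(y)$; points incident with their own image are absolute and carry loops. An independent set is a set of vertices no two distinct members of which are adjacent (absolute points may belong to it). *)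

theory Defs
  imports "HOL-Analysis.Finite_Cartesian_Product"
begin

text \<open>Vectors of F^4, F a finite field; points/lines of PG(3,F) as 1-/2-dimensional
 subspaces (sets of vectors); standard nondegenerate alternating form.\<close>

definition symp :: "'a::field ^ 4 \<Rightarrow> 'a ^ 4 \<Rightarrow> 'a" where
  "symp x y = x$1 * y$2 - x$2 * y$1 + x$3 * y$4 - x$4 * y$3"

definition lincomb2 :: "'a::field \<Rightarrow> 'a ^ 4 \<Rightarrow> 'a \<Rightarrow> 'a ^ 4 \<Rightarrow> 'a ^ 4" where
  "lincomb2 a u b v = (\<chi> i. a * u$i + b * v$i)"

definition span1 :: "'a::field ^ 4 \<Rightarrow> ('a ^ 4) set" where
  "span1 v = {(\<chi> i. c * v$i) | c. True}"

definition span2 :: "'a::field ^ 4 \<Rightarrow> 'a ^ 4 \<Rightarrow> ('a ^ 4) set" where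
  "span2 u v = {lincomb2 a u b v | a b. True}"

definition lin_indep2 :: "'a::field ^ 4 \<Rightarrow> 'a ^ 4 \<Rightarrow> bool" where
  "lin_indep2 u v \<longleftrightarrow> (\<forall>a b. lincomb2 a u b v = 0 \<longrightarrow> a = 0 \<and> b = 0)"

definition W_points :: "('a::field ^ 4) set set" where
  "W_points = {span1 v | v. v \<noteq> 0}"

definition W_lines :: "('a::field ^ 4) set set" where
  "W_lines = {span2 u v | u v. lin_indep2 u v \<and> symp u v = 0}"

text \<open>incidence: point p on line l iff p \<subseteq> l\<close>

definition is_polarity :: "(('a::field ^ 4) set \<Rightarrow> ('a ^ 4) set) \<Rightarrow> bool" where
  "is_polarity \<sigma> \<longleftrightarrow>
     bij_betw \<sigma> W_points W_lines \<and> bij_betw \<sigma> W_lines W_points \<and>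
     (\<forall>x \<in> W_points \<union> W_lines. \<sigma> (\<sigma> x) = x) \<and>
     (\<forall>p \<in> W_points. \<forall>l \<in> W_lines. p \<subseteq> l \<longleftrightarrow> \<sigma> l \<subseteq> \<sigma> p)"

definition polarity_adj :: "(('a::field ^ 4) set \<Rightarrow> ('a ^ 4) set) \<Rightarrow> ('a ^ 4) set \<Rightarrow> ('a ^ 4) set \<Rightarrow> bool" where
  "polarity_adj \<sigma> x y \<longleftrightarrow> x \<subseteq> \<sigma> y"

definition polarity_independent :: "(('a::field ^ 4) set \<Rightarrow> ('a ^ 4) set) \<Rightarrow> ('a ^ 4) set set \<Rightarrow> bool" where
  "polarity_independent \<sigma> S \<longleftrightarrow> S \<subseteq> W_points \<and>
     (\<forall>x \<in> S. \<forall>y \<in> S. x \<noteq> y \<longrightarrow> \<not> polarity_adj \<sigma> x y)"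

end

theory Submission
  imports Defs "HOL-Analysis.Cartesian_Space"
begin

definition sm :: "'a::field \<Rightarrow> 'a ^ 4 \<Rightarrow> 'a ^ 4" where
  "sm c v = (\<chi> i. c * v$i)"

lemma sm_nth[simp]: "sm c v $ i = c * v $ i"
  by (simp add: sm_def)

lemma sm_0[simp]: "sm 0 v = 0" "sm c 0 = 0" "sm 1 v = v"
  by (simp_all add: vec_eq_iff)

lemma sm_sm[simp]: "sm a (sm b v) = sm (a*b) v"
  by (simp add: vec_eq_iff)

lemma sm_add: "sm a (u + v) = sm a u + sm a v" "sm (a + b) v = sm a v + sm b v"
  by (simp_all add: vec_eq_iff algebra_simps)

lemma lincomb2_sm: "lincomb2 a u b v = sm a u + sm b v"
  by (simp add: lincomb2_def vec_eq_iff)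

lemma symp_add_left: "symp (u + v) w = symp u w + symp v w"
  by (simp add: symp_def algebra_simps)
lemma symp_add_right: "symp w (u + v) = symp w u + symp w v"
  by (simp add: symp_def algebra_simps)
lemma symp_sm_left[simp]: "symp (sm c u) w = c * symp u w"
  by (simp add: symp_def algebra_simps)
lemma symp_sm_right[simp]: "symp w (sm c u) = c * symp w u"
  by (simp add: symp_def algebra_simps)
lemma symp_self[simp]: "symp u u = 0"
  by (simp add: symp_def algebra_simps)
lemma symp_anti: "symp u v = - symp v u"
  by (simp add: symp_def algebra_simps)
lemma symp_zero[simp]: "symp 0 w = 0" "symp w 0 = 0"
  by (simp_all add: symp_def)

lemma symp_nondeg:
  fixes z :: "'a::field ^ 4"
  assumes "\<forall>w. symp z w = 0" shows "z = 0"
proof -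
  define e :: "4 \<Rightarrow> 'a ^ 4" where "e k = (\<chi> i. if i = k then 1 else 0)" for k
  have "symp z (e 2) = z$1" "symp z (e 1) = - z$2" "symp z (e 4) = z$3" "symp z (e 3) = - z$4"
    by (simp_all add: symp_def e_def)
  then have "z$1 = 0" "z$2 = 0" "z$3 = 0" "z$4 = 0" using assms by simp_all
  then show ?thesis by (simp add: vec_eq_iff forall_4)
qed

lemma nonzero_comp: "(v::'a::zero^4) \<noteq> 0 \<Longrightarrow> \<exists>i. v$i \<noteq> 0"
  by (simp add: vec_eq_iff)

lemma span1_eq: "span1 v = range (\<lambda>c. sm c v)"
  by (auto simp: span1_def sm_def)

lemma inj_sm: "(v::'a::field^4) \<noteq> 0 \<Longrightarrow> inj (\<lambda>c. sm c v)"
proof (rule injI)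
  fix a b assume v: "v \<noteq> 0" and "sm a v = sm b v"
  obtain i where "v$i \<noteq> 0" using nonzero_comp[OF v] by blast
  moreover have "a * v$i = b * v$i" using \<open>sm a v = sm b v\<close> by (metis sm_nth)
  ultimately show "a = b" by simp
qed

lemma card_span1: "(v::'a::{field,finite}^4) \<noteq> 0 \<Longrightarrow> card (span1 v) = CARD('a)"
  by (simp add: span1_eq card_image inj_sm)

lemma zero_in_span1[simp]: "0 \<in> span1 v"
  by (auto simp: span1_eq intro: range_eqI[where x=0])
lemma self_in_span1[simp]: "v \<in> span1 v"
  by (auto simp: span1_eq intro: range_eqI[where x=1])

lemma span1_same:
  assumes "w \<in> span1 v" "w \<noteq> 0" shows "span1 w = span1 v"
proof -
  obtain c where w: "w = sm c v" using assms(1) by (auto simp: span1_eq)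
  have c: "c \<noteq> 0" using assms(2) w by auto
  have 1: "sm d v = sm (d / c) w" for d using c by (simp add: w)
  show ?thesis
  proof
    show "span1 w \<subseteq> span1 v" using w by (auto simp: span1_eq)
    show "span1 v \<subseteq> span1 w" unfolding span1_eq using 1 by blast
  qed
qed

lemma finite_vecs[simp, intro]: "finite (X :: ('a::finite^4) set)"
  by simp

lemma q_ge2: "CARD('a::{field,finite}) \<ge> 2"
proof -
  have "card {0::'a, 1} = 2" by simp
  moreover have "card {0::'a, 1} \<le> CARD('a)" by (rule card_mono) auto
  ultimately show ?thesis by simp
qed

lemma count_points:
  fixes V :: "('a::{field,finite}^4) set"
  assumes "0 \<in> V" "\<And>c v. v \<in> V \<Longrightarrow> sm c v \<in> V"
  shows "card {span1 v | v. v \<in> V \<and> v \<noteq> 0} * (CARD('a) - 1) = card V - 1"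
proof -
  define Pt where "Pt = {span1 v | v. v \<in> V \<and> v \<noteq> 0}"
  have un: "V - {0} = \<Union>((\<lambda>p. p - {0}) ` Pt)"
  proof
    show "V - {0} \<subseteq> \<Union>((\<lambda>p. p - {0}) ` Pt)"
    proof
      fix v assume v: "v \<in> V - {0}"
      then have "span1 v \<in> Pt" unfolding Pt_def by auto
      moreover have "v \<in> span1 v - {0}" using v by simp
      ultimately show "v \<in> \<Union>((\<lambda>p. p - {0}) ` Pt)" by blast
    qed
    show "\<Union>((\<lambda>p. p - {0}) ` Pt) \<subseteq> V - {0}"
    proof
      fix w assume "w \<in> \<Union>((\<lambda>p. p - {0}) ` Pt)"
      then obtain v where "v \<in> V" "w \<in> span1 v" "w \<noteq> 0" unfolding Pt_def by auto
      then show "w \<in> V - {0}" using assms(2) by (auto simp: span1_eq)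
    qed
  qed
  have fin: "finite Pt" by simp
  have disj: "\<forall>i\<in>Pt. \<forall>j\<in>Pt. i \<noteq> j \<longrightarrow> (i - {0}) \<inter> (j - {0}) = {}"
  proof (intro ballI impI)
    fix i j assume "i \<in> Pt" "j \<in> Pt" "i \<noteq> j"
    then obtain a b where ab: "i = span1 a" "j = span1 b" unfolding Pt_def by auto
    show "(i - {0}) \<inter> (j - {0}) = {}"
    proof (rule ccontr)
      assume "(i - {0}) \<inter> (j - {0}) \<noteq> {}"
      then obtain w where "w \<in> span1 a" "w \<in> span1 b" "w \<noteq> 0" using ab by auto
      then have "span1 w = i" "span1 w = j" using span1_same ab by metis+
      then show False using \<open>i \<noteq> j\<close> by simp
    qed
  qed
  have cd: "\<forall>i\<in>Pt. card (i - {0}) = CARD('a) - 1"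
    unfolding Pt_def by (auto simp: card_Diff_singleton card_span1)
  have "card (V - {0}) = (\<Sum>i\<in>Pt. card (i - {0}))"
    unfolding un by (rule card_UN_disjoint) (use fin disj in auto)
  also have "\<dots> = card Pt * (CARD('a) - 1)" using cd by simp
  finally show ?thesis using assms(1) unfolding Pt_def by (simp add: card_Diff_singleton)
qed


lemma card_hyper:
  fixes V :: "('a::{field,finite}^4) set"
  assumes add: "\<And>x y. x\<in>V \<Longrightarrow> y\<in>V \<Longrightarrow> x + y \<in> V" and smc: "\<And>c x. x\<in>V \<Longrightarrow> sm c x \<in> V"
    and w0: "w0 \<in> V" "symp z w0 = 1"
  shows "card V = card {w\<in>V. symp z w = 0} * CARD('a)"
proof -
  let ?K = "{w\<in>V. symp z w = 0}"
  let ?f = "\<lambda>(w,c::'a). w + sm c w0"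
  let ?g = "\<lambda>v. (v + sm (- symp z v) w0, symp z v)"
  have "bij_betw ?f (?K \<times> (UNIV::'a set)) V"
  proof (rule bij_betw_byWitness[where f'="?g"])
    show "\<forall>a\<in>?K \<times> (UNIV::'a set). ?g (?f a) = a"
    proof
      fix a assume "a \<in> ?K \<times> (UNIV::'a set)"
      then obtain w and c :: 'a where a: "a = (w,c)" "symp z w = 0" by auto
      have s: "symp z (w + sm c w0) = c" using a w0 by (simp add: symp_add_right)
      show "?g (?f a) = a" using a s by (simp add: vec_eq_iff algebra_simps)
    qed
    show "\<forall>a'\<in>V. ?f (?g a') = a'"
      by (simp add: vec_eq_iff algebra_simps)
    show "?f ` (?K \<times> (UNIV::'a set)) \<subseteq> V" using add smc w0 by auto
    show "?g ` V \<subseteq> ?K \<times> (UNIV::'a set)"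
    proof
      fix x assume "x \<in> ?g ` V"
      then obtain v where v: "v \<in> V" "x = ?g v" by auto
      have "symp z (v + sm (- symp z v) w0) = 0" using w0 by (simp add: symp_add_right)
      then show "x \<in> ?K \<times> (UNIV::'a set)" using v add smc w0 by auto
    qed
  qed
  then have "card V = card (?K \<times> (UNIV::'a set))" by (simp add: bij_betw_same_card)
  then show ?thesis by (simp add: card_cartesian_product)
qed

lemma exists_symp1:
  fixes u :: "'a::field^4"
  assumes "u \<noteq> 0" shows "\<exists>w. symp u w = 1"
proof -
  obtain w where w: "symp u w \<noteq> 0" using symp_nondeg assms by blast
  show ?thesis by (rule exI[where x="sm (1 / symp u w) w"]) (use w in simp)
qed

lemma card_UNIV4: "card (UNIV :: ('a::finite^4) set) = CARD('a)^4"
  by simp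

lemma card_ker1:
  fixes u :: "'a::{field,finite}^4"
  assumes "u \<noteq> 0" shows "card {w. symp u w = 0} = CARD('a)^3"
proof -
  obtain w0 where "symp u w0 = 1" using exists_symp1 assms by blast
  then have "card (UNIV :: ('a^4) set) = card {w\<in>UNIV. symp u w = 0} * CARD('a)"
    by (intro card_hyper) auto
  then have "CARD('a)^3 * CARD('a) = card {w. symp u w = 0} * CARD('a)"
    by (simp add: power_Suc2 [symmetric] del: power_Suc)
  then show ?thesis using q_ge2[where 'a='a] by simp
qed

lemma lin_indep2_nz: "lin_indep2 u v \<Longrightarrow> (u::'a::field^4) \<noteq> 0"
proof
  assume "lin_indep2 u v" "u = 0"
  then have "lincomb2 1 u 0 v = 0" by (simp add: lincomb2_sm)
  then show False using \<open>lin_indep2 u v\<close> unfolding lin_indep2_def by fastforce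
qed

lemma card_ker2:
  fixes u v :: "'a::{field,finite}^4"
  assumes li: "lin_indep2 u v" shows "card {w. symp u w = 0 \<and> symp v w = 0} = CARD('a)^2"
proof -
  have u0: "u \<noteq> 0" using lin_indep2_nz li by blast
  obtain w0 where w0: "symp u w0 = 1" using exists_symp1 u0 by blast
  have "\<exists>w. symp u w = 0 \<and> symp v w \<noteq> 0"
  proof (rule ccontr)
    assume "\<not> ?thesis"
    then have imp: "symp u w = 0 \<Longrightarrow> symp v w = 0" for w by blast
    define l where "l = symp v w0"
    have "symp (v + sm (- l) u) w = 0" for w
    proof -
      have "symp u (w + sm (- symp u w) w0) = 0" using w0 by (simp add: symp_add_right)
      then have "symp v (w + sm (- symp u w) w0) = 0" by (rule imp)
      then show ?thesis by (simp add: symp_add_right symp_add_left l_def algebra_simps)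
    qed
    then have "v + sm (- l) u = 0" by (intro symp_nondeg) blast
    then have "lincomb2 (- l) u 1 v = 0" by (simp add: lincomb2_sm add.commute)
    then show False using li unfolding lin_indep2_def by (metis one_neq_zero)
  qed
  then obtain w where w: "symp u w = 0" "symp v w \<noteq> 0" by blast
  let ?V = "{w. symp u w = 0}"
  have "card ?V = card {x\<in>?V. symp v x = 0} * CARD('a)"
    by (rule card_hyper[where ?w0.0="sm (1 / symp v w) w"]) (use w in \<open>auto simp: symp_add_right\<close>)
  then have "CARD('a)^2 * CARD('a) = card {w. symp u w = 0 \<and> symp v w = 0} * CARD('a)"
    using card_ker1[OF u0] by (simp add: power_Suc2 [symmetric] del: power_Suc)
  then show ?thesis using q_ge2[where 'a='a] by simp
qed


definition perp :: "('a::field ^ 4) set \<Rightarrow> ('a ^ 4) set \<Rightarrow> bool" where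
  "perp x y \<longleftrightarrow> (\<forall>a\<in>x. \<forall>b\<in>y. symp a b = 0)"

lemma pointE: "x \<in> W_points \<Longrightarrow> (\<And>u. u \<noteq> 0 \<Longrightarrow> x = span1 u \<Longrightarrow> thesis) \<Longrightarrow> thesis"
  unfolding W_points_def by blast

lemma point_span1: "u \<noteq> 0 \<Longrightarrow> span1 u \<in> W_points"
  unfolding W_points_def by blast

lemma perp_span1: "perp (span1 u) (span1 v) \<longleftrightarrow> symp u v = 0"
  unfolding perp_def span1_eq by auto

lemma perp_sym: "perp x y \<Longrightarrow> perp y x"
  unfolding perp_def by (metis symp_anti neg_equal_0_iff_equal)

lemma perp_refl: "x \<in> W_points \<Longrightarrow> perp x x"
  by (auto elim: pointE simp: perp_span1)

lemma nat_cancel: "(q::nat) \<ge> 2 \<Longrightarrow> c * (q - 1) = d * (q - 1) \<Longrightarrow> c = d"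
  by simp

lemma card_points: "card (W_points :: ('a::{field,finite}^4) set set) = CARD('a)^3 + CARD('a)^2 + CARD('a) + 1"
proof -
  let ?q = "CARD('a)"
  have e: "W_points = {span1 v | v::'a^4. v \<in> UNIV \<and> v \<noteq> 0}" unfolding W_points_def by auto
  have "card (W_points :: ('a^4) set set) * (?q - 1) = card (UNIV :: ('a^4) set) - 1"
    unfolding e by (rule count_points) auto
  also have "\<dots> = (?q^3 + ?q^2 + ?q + 1) * (?q - 1)"
    using q_ge2[where 'a='a] by (cases ?q) (simp_all add: algebra_simps power2_eq_square power3_eq_cube power4_eq_xxxx)
  finally show ?thesis using q_ge2[where 'a='a] nat_cancel by blast
qed

lemma indep_of_distinct:
  assumes "u \<noteq> 0" "v \<noteq> 0" "span1 u \<noteq> span1 (v::'a::field^4)"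
  shows "lin_indep2 u v"
  unfolding lin_indep2_def
proof (intro allI impI)
  fix a b assume h: "lincomb2 a u b v = 0"
  have a0: "a = 0"
  proof (rule ccontr)
    assume a: "a \<noteq> 0"
    have "\<forall>i. a * u $ i + b * v $ i = 0" using h by (simp add: lincomb2_sm vec_eq_iff)
    then have "sm a u = sm (- b) v" by (simp add: vec_eq_iff eq_neg_iff_add_eq_0)
    then have "sm (1/a) (sm a u) = sm (1/a) (sm (- b) v)" by simp
    then have "u = sm (- b / a) v" using a by simp
    then have "u \<in> span1 v" by (auto simp: span1_eq)
    then have "span1 u = span1 v" using span1_same assms(1) by blast
    then show False using assms(3) by simp
  qed
  then have "sm b v = sm 0 v" using h by (simp add: lincomb2_sm)
  then have "b = 0" using injD[OF inj_sm[OF assms(2)]] by blast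
  then show "a = 0 \<and> b = 0" using a0 by simp
qed

lemma card_perp1:
  assumes "x \<in> (W_points :: ('a::{field,finite}^4) set set)"
  shows "card {y \<in> W_points. perp x y} = CARD('a)^2 + CARD('a) + 1"
proof -
  let ?q = "CARD('a)"
  obtain u where u: "u \<noteq> 0" "x = span1 u" using assms by (rule pointE)
  have e: "{y \<in> W_points. perp x y} = {span1 v | v. v \<in> {w. symp u w = 0} \<and> v \<noteq> 0}"
    unfolding u(2) by (auto simp: perp_span1 W_points_def)
  have "card {y \<in> W_points. perp x y} * (?q - 1) = card {w. symp u w = 0} - 1"
    unfolding e by (rule count_points) auto
  also have "\<dots> = (?q^2 + ?q + 1) * (?q - 1)"
    using q_ge2[where 'a='a] card_ker1[OF u(1)] by (cases ?q) (simp_all add: algebra_simps power2_eq_square power3_eq_cube)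
  finally show ?thesis using q_ge2[where 'a='a] nat_cancel by blast
qed

lemma card_perp2:
  assumes "x \<in> (W_points :: ('a::{field,finite}^4) set set)" "z \<in> W_points" "x \<noteq> z"
  shows "card {y \<in> W_points. perp x y \<and> perp z y} = CARD('a) + 1"
proof -
  let ?q = "CARD('a)"
  obtain u where u: "u \<noteq> 0" "x = span1 u" using assms(1) by (rule pointE)
  obtain v where v: "v \<noteq> 0" "z = span1 v" using assms(2) by (rule pointE)
  have li: "lin_indep2 u v" using indep_of_distinct u v assms(3) by blast
  have e: "{y \<in> W_points. perp x y \<and> perp z y} = {span1 w | w. w \<in> {w. symp u w = 0 \<and> symp v w = 0} \<and> w \<noteq> 0}"
    unfolding u(2) v(2) by (auto simp: perp_span1 W_points_def)
  have "card {y \<in> W_points. perp x y \<and> perp z y} * (?q - 1) = card {w. symp u w = 0 \<and> symp v w = 0} - 1"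
    unfolding e by (rule count_points) auto
  also have "\<dots> = (?q + 1) * (?q - 1)"
    using q_ge2[where 'a='a] card_ker2[OF li] by (cases ?q) (simp_all add: algebra_simps power2_eq_square)
  finally show ?thesis using q_ge2[where 'a='a] nat_cancel by blast
qed

lemma span2_eq: "span2 u v = {sm a u + sm b v | a b. True}"
  unfolding span2_def lincomb2_sm ..

lemma card_span2:
  assumes "lin_indep2 u (v::'a::{field,finite}^4)"
  shows "card (span2 u v) = CARD('a)^2"
proof -
  have e: "span2 u v = (\<lambda>(a,b). sm a u + sm b v) ` (UNIV \<times> UNIV)" unfolding span2_eq by auto
  have "inj_on (\<lambda>(a,b). sm a u + sm b v) (UNIV \<times> UNIV)"
  proof (rule inj_onI, clarify)
    fix a b a' b' assume "sm a u + sm b v = sm a' u + sm b' v"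
    then have "lincomb2 (a - a') u (b - b') v = 0" by (simp add: lincomb2_sm vec_eq_iff algebra_simps)
    then show "a = a' \<and> b = b'" using assms unfolding lin_indep2_def by fastforce
  qed
  then show ?thesis unfolding e by (simp add: card_image card_cartesian_product power2_eq_square)
qed

lemma span2_add: "x \<in> span2 u v \<Longrightarrow> y \<in> span2 u v \<Longrightarrow> x + y \<in> span2 u v"
  unfolding span2_eq
proof clarify
  fix a b c d
  have "sm a u + sm b v + (sm c u + sm d v) = sm (a + c) u + sm (b + d) v"
    by (simp add: vec_eq_iff algebra_simps)
  then show "\<exists>a' b'. sm a u + sm b v + (sm c u + sm d v) = sm a' u + sm b' v \<and> True" by blast
qed

lemma span2_sm: "x \<in> span2 u v \<Longrightarrow> sm c x \<in> span2 u v"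
  unfolding span2_eq
proof clarify
  fix a b
  have "sm c (sm a u + sm b v) = sm (c*a) u + sm (c*b) v"
    by (simp add: vec_eq_iff algebra_simps)
  then show "\<exists>a' b'. sm c (sm a u + sm b v) = sm a' u + sm b' v \<and> True" by blast
qed

lemma span2_0: "0 \<in> span2 u v"
proof -
  have "(0::'a::field^4) = sm 0 u + sm 0 v" by simp
  then show ?thesis unfolding span2_eq by blast
qed
lemma span2_u: "u \<in> span2 u v"
proof -
  have "(u::'a::field^4) = sm 1 u + sm 0 v" by simp
  then show ?thesis unfolding span2_eq by blast
qed
lemma span2_v: "v \<in> span2 u v"
proof -
  have "(v::'a::field^4) = sm 0 u + sm 1 v" by simp
  then show ?thesis unfolding span2_eq by blast
qed

lemma span2_iso:
  assumes "symp u v = 0" "x \<in> span2 u v" "y \<in> span2 u v" shows "symp x y = 0"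
proof -
  obtain a b c d where "x = sm a u + sm b v" "y = sm c u + sm d v" using assms(2,3) unfolding span2_eq by blast
  moreover have "symp v u = 0" using assms(1) symp_anti by (metis neg_equal_0_iff_equal)
  ultimately show ?thesis using assms(1) by (simp add: symp_add_left symp_add_right)
qed

lemma span2_sub:
  assumes "a \<in> span2 u v" "b \<in> span2 u v" shows "span2 a b \<subseteq> span2 u v"
proof
  fix x assume "x \<in> span2 a b"
  then obtain c d where "x = sm c a + sm d b" unfolding span2_eq by blast
  then show "x \<in> span2 u v" using assms span2_add span2_sm by metis
qed

lemma lineE: "l \<in> W_lines \<Longrightarrow> (\<And>u v. lin_indep2 u v \<Longrightarrow> symp u v = 0 \<Longrightarrow> l = span2 u v \<Longrightarrow> thesis) \<Longrightarrow> thesis"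
  unfolding W_lines_def by blast

lemma point_sub_line:
  assumes "l \<in> W_lines" shows "span1 w \<subseteq> l \<longleftrightarrow> w \<in> l"
proof -
  obtain u v where l: "l = span2 u v" using assms by (rule lineE)
  show ?thesis using self_in_span1 span2_sm unfolding l span1_eq by blast
qed

lemma card_line_points:
  assumes "l \<in> (W_lines :: ('a::{field,finite}^4) set set)"
  shows "card {y \<in> W_points. y \<subseteq> l} = CARD('a) + 1"
proof -
  let ?q = "CARD('a)"
  obtain u v where uv: "lin_indep2 u v" "symp u v = 0" "l = span2 u v" using assms by (rule lineE)
  have e: "{y \<in> W_points. y \<subseteq> l} = {span1 w | w. w \<in> l \<and> w \<noteq> 0}"
    using point_sub_line[OF assms] by (auto simp: W_points_def)
  have "card {y \<in> W_points. y \<subseteq> l} * (?q - 1) = card l - 1"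
    unfolding e by (rule count_points) (use uv span2_0 span2_sm in auto)
  also have "\<dots> = (?q + 1) * (?q - 1)"
    using q_ge2[where 'a='a] card_span2[OF uv(1)] uv(3) by (cases ?q) (simp_all add: algebra_simps power2_eq_square)
  finally show ?thesis using q_ge2[where 'a='a] nat_cancel by blast
qed

lemma line_perp:
  assumes "l \<in> W_lines" "x \<subseteq> l" "y \<subseteq> l" shows "perp x y"
proof -
  obtain u v where uv: "lin_indep2 u v" "symp u v = 0" "l = span2 u v" using assms(1) by (rule lineE)
  show ?thesis unfolding perp_def using span2_iso[OF uv(2)] assms(2,3) uv(3) by blast
qed

lemma line_unique:
  fixes x y :: "('a::{field,finite}^4) set"
  assumes "x \<in> W_points" "y \<in> W_points" "x \<noteq> y" "l1 \<in> W_lines" "l2 \<in> W_lines"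
    "x \<subseteq> l1" "y \<subseteq> l1" "x \<subseteq> l2" "y \<subseteq> l2"
  shows "l1 = l2"
proof -
  obtain a where a: "a \<noteq> 0" "x = span1 a" using assms(1) by (rule pointE)
  obtain b where b: "b \<noteq> 0" "y = span1 b" using assms(2) by (rule pointE)
  have li: "lin_indep2 a b" using indep_of_distinct a b assms(3) by blast
  have key: "span2 a b = l" if lh: "l \<in> W_lines" "x \<subseteq> l" "y \<subseteq> l" for l
  proof -
    obtain u v where uv: "lin_indep2 u v" "symp u v = 0" "l = span2 u v" using lh(1) by (rule lineE)
    have "a \<in> l" "b \<in> l" using lh a b by auto
    then have "span2 a b \<subseteq> l" using span2_sub uv(3) by blast
    moreover have "card (span2 a b) = card l" using card_span2[OF li] card_span2[OF uv(1)] uv(3) by simp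
    ultimately show ?thesis by (intro card_subset_eq) auto
  qed
  show ?thesis using key[OF assms(4,6,7)] key[OF assms(5,8,9)] by simp
qed

lemma line_exists:
  fixes x y :: "('a::{field,finite}^4) set"
  assumes "x \<in> W_points" "y \<in> W_points" "x \<noteq> y" "perp x y"
  shows "\<exists>l\<in>W_lines. x \<subseteq> l \<and> y \<subseteq> l"
proof -
  obtain a where a: "a \<noteq> 0" "x = span1 a" using assms(1) by (rule pointE)
  obtain b where b: "b \<noteq> 0" "y = span1 b" using assms(2) by (rule pointE)
  have li: "lin_indep2 a b" using indep_of_distinct a b assms(3) by blast
  have s: "symp a b = 0" using assms(4) a b perp_span1 by blast
  have l: "span2 a b \<in> W_lines" using li s unfolding W_lines_def by blast
  have "x \<subseteq> span2 a b" "y \<subseteq> span2 a b" using point_sub_line[OF l] a b span2_u span2_v by auto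
  then show ?thesis using l by blast
qed


lemma finite_sets[simp, intro]: "finite (X :: ('a::finite^4) set set)"
  by (rule finite_subset[OF subset_UNIV]) simp

lemma card_lines_through:
  assumes x: "x \<in> (W_points :: ('a::{field,finite}^4) set set)"
  shows "card {l \<in> W_lines. x \<subseteq> l} = CARD('a) + 1"
proof -
  let ?q = "CARD('a)"
  define T where "T = {l \<in> W_lines. x \<subseteq> l}"
  define Y where "Y = {y \<in> W_points. perp x y} - {x}"
  have cY: "card Y = ?q^2 + ?q" unfolding Y_def using card_perp1[OF x] perp_refl[OF x] x
    by (simp add: card_Diff_singleton)
  have f1: "{l\<in>T. y \<subseteq> l} = {l0}" if "y \<in> Y" "l0 \<in> W_lines" "x \<subseteq> l0" "y \<subseteq> l0" for y l0
    using that line_unique[of x y] x unfolding T_def Y_def by blast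
  have c1: "card {l\<in>T. y \<subseteq> l} = 1" if yY: "y \<in> Y" for y
  proof -
    obtain l0 where "l0 \<in> W_lines" "x \<subseteq> l0" "y \<subseteq> l0"
      using line_exists[of x y] x yY unfolding Y_def by blast
    then show ?thesis using f1[OF yY] by simp
  qed
  have c2: "card {y\<in>Y. y \<subseteq> l} = ?q" if "l \<in> T" for l
  proof -
    have l: "l \<in> W_lines" "x \<subseteq> l" using that unfolding T_def by auto
    have "{y\<in>Y. y \<subseteq> l} = {y \<in> W_points. y \<subseteq> l} - {x}"
      unfolding Y_def using line_perp[OF l(1)] l(2) by blast
    then show ?thesis using card_line_points[OF l(1)] l(2) x by (simp add: card_Diff_singleton)
  qed
  have "card (SIGMA y:Y. {l\<in>T. y \<subseteq> l}) = card Y" using c1 by simp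
  moreover have "card (SIGMA l:T. {y\<in>Y. y \<subseteq> l}) = card T * ?q" using c2 by simp
  moreover have "(SIGMA l:T. {y\<in>Y. y \<subseteq> l}) = prod.swap ` (SIGMA y:Y. {l\<in>T. y \<subseteq> l})" by auto
  moreover have "card (prod.swap ` (SIGMA y:Y. {l\<in>T. y \<subseteq> l})) = card (SIGMA y:Y. {l\<in>T. y \<subseteq> l})"
    by (rule card_image) simp
  ultimately have "card T * ?q = (?q + 1) * ?q" using cY by (simp add: power2_eq_square algebra_simps)
  then have "card T = ?q + 1" using q_ge2[where 'a='a] by (metis mult_right_cancel not_numeral_le_zero)
  then show ?thesis unfolding T_def .
qed

lemma card_lines2:
  assumes x: "x \<in> (W_points :: ('a::{field,finite}^4) set set)" and z: "z \<in> W_points"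
  shows "real (card {l \<in> W_lines. x \<subseteq> l \<and> z \<subseteq> l}) = real CARD('a) * of_bool (x = z) + of_bool (perp x z)"
proof (cases "x = z")
  case True
  then show ?thesis using card_lines_through[OF x] perp_refl[OF x] by simp
next
  case False
  show ?thesis
  proof (cases "perp x z")
    case True
    obtain l0 where l0: "l0 \<in> W_lines" "x \<subseteq> l0" "z \<subseteq> l0" using line_exists[OF x z False True] by blast
    have "{l \<in> W_lines. x \<subseteq> l \<and> z \<subseteq> l} = {l0}" using l0 line_unique[OF x z False] by blast
    then show ?thesis using False True by simp
  next
    case nf: False
    have "{l \<in> W_lines. x \<subseteq> l \<and> z \<subseteq> l} = {}" using nf line_perp by blast
    then show ?thesis using False nf by simp
  qed
qed

lemma mm_square:
  assumes x: "x \<in> (W_points :: ('a::{field,finite}^4) set set)" and z: "z \<in> W_points"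
  shows "(\<Sum>y\<in>W_points. (real CARD('a) * of_bool (x = y) + of_bool (perp x y)) *
                        (real CARD('a) * of_bool (y = z) + of_bool (perp y z)))
         = 2 * real CARD('a) * (real CARD('a) * of_bool (x = z) + of_bool (perp x z)) + (real CARD('a) + 1)"
proof -
  let ?q = "real CARD('a)"
  let ?P = "W_points :: ('a^4) set set"
  have e: "(?q * of_bool (x = y) + of_bool (perp x y)) * (?q * of_bool (y = z) + of_bool (perp y z))
     = ?q * ?q * (of_bool (x = y) * of_bool (y = z)) + ?q * (of_bool (x = y) * of_bool (perp y z))
       + ?q * (of_bool (y = z) * of_bool (perp x y)) + of_bool (perp x y \<and> perp y z)" for y
    by (simp add: algebra_simps)
  have s1: "(\<Sum>y\<in>?P. of_bool (x = y) * of_bool (y = z)) = (of_bool (x = z) :: real)" using x by auto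
  have s2: "(\<Sum>y\<in>?P. of_bool (x = y) * of_bool (perp y z)) = (of_bool (perp x z) :: real)" using x by auto
  have s3: "(\<Sum>y\<in>?P. of_bool (y = z) * of_bool (perp x y)) = (of_bool (perp x z) :: real)" using z by auto
  have s4: "(\<Sum>y\<in>?P. of_bool (perp x y \<and> perp y z)) = (if x = z then ?q^2 + ?q + 1 else ?q + 1)"
  proof (cases "x = z")
    case True
    have "?P \<inter> {y. perp x y \<and> perp y z} = {y \<in> ?P. perp x y}" using True perp_sym by blast
    then show ?thesis using True card_perp1[OF x] by simp
  next
    case False
    have "?P \<inter> {y. perp x y \<and> perp y z} = {y \<in> ?P. perp x y \<and> perp z y}" using perp_sym by blast
    then show ?thesis using False card_perp2[OF x z False] by simp
  qed
  show ?thesis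
    unfolding e sum.distrib sum_distrib_left[symmetric] s1 s2 s3 s4
    using perp_refl[OF x] by (cases "x = z") (simp_all add: algebra_simps power2_eq_square)
qed


lemma spectral:
  fixes P :: "'p set" and A :: "'p \<Rightarrow> 'p \<Rightarrow> real" and v :: "'p \<Rightarrow> real" and c e :: real
  assumes fin: "finite P" and sym: "\<And>x y. x\<in>P \<Longrightarrow> y\<in>P \<Longrightarrow> A x y = A y x"
  and M4: "\<And>x z. x\<in>P \<Longrightarrow> z\<in>P \<Longrightarrow> (\<Sum>y\<in>P. (\<Sum>w\<in>P. A x w * A w y) * (\<Sum>w\<in>P. A y w * A w z))
             = c^2 * (\<Sum>w\<in>P. A x w * A w z) + e"
  and c: "c > 0" and s0: "(\<Sum>x\<in>P. v x) = 0"
  shows "(\<Sum>x\<in>P. v x * (\<Sum>y\<in>P. A x y * v y)) \<ge> - c * (\<Sum>x\<in>P. (v x)^2)"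
proof -
  define M where "M x y = (\<Sum>w\<in>P. A x w * A w y)" for x y
  define Av where "Av x = (\<Sum>y\<in>P. A x y * v y)" for x
  define Mv where "Mv x = (\<Sum>y\<in>P. M x y * v y)" for x
  define N where "N = (\<Sum>x\<in>P. (v x)^2)"
  have Msym: "M x y = M y x" if "x\<in>P" "y\<in>P" for x y
    unfolding M_def by (rule sum.cong) (use that sym in \<open>auto simp: mult.commute\<close>)
  have one: "(\<Sum>x\<in>P. v x * Mv x) = (\<Sum>w\<in>P. (Av w)^2)"
  proof -
    have "(\<Sum>x\<in>P. v x * Mv x) = (\<Sum>x\<in>P. \<Sum>y\<in>P. \<Sum>w\<in>P. v x * A x w * A w y * v y)"
      unfolding Mv_def M_def by (simp add: sum_distrib_left sum_distrib_right mult.assoc)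
    also have "\<dots> = (\<Sum>x\<in>P. \<Sum>w\<in>P. \<Sum>y\<in>P. v x * A x w * A w y * v y)"
      by (rule sum.cong[OF refl], rule sum.swap)
    also have "\<dots> = (\<Sum>w\<in>P. \<Sum>x\<in>P. \<Sum>y\<in>P. v x * A x w * A w y * v y)"
      by (rule sum.swap)
    also have "\<dots> = (\<Sum>w\<in>P. \<Sum>x\<in>P. \<Sum>y\<in>P. (A w x * v x) * (A w y * v y))"
      by (intro sum.cong refl) (simp add: sym mult_ac)
    also have "\<dots> = (\<Sum>w\<in>P. (Av w)^2)"
      unfolding Av_def power2_eq_square sum_product ..
    finally show ?thesis .
  qed
  have two: "(\<Sum>x\<in>P. M y x * Mv x) = c^2 * Mv y" if y: "y \<in> P" for y
  proof -
    have "(\<Sum>x\<in>P. M y x * Mv x) = (\<Sum>x\<in>P. \<Sum>z\<in>P. M y x * M x z * v z)"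
      unfolding Mv_def by (simp add: sum_distrib_left mult.assoc)
    also have "\<dots> = (\<Sum>z\<in>P. \<Sum>x\<in>P. M y x * M x z * v z)" by (rule sum.swap)
    also have "\<dots> = (\<Sum>z\<in>P. (c^2 * M y z + e) * v z)"
      by (intro sum.cong refl) (use y M4 in \<open>simp add: M_def sum_distrib_right[symmetric]\<close>)
    also have "\<dots> = c^2 * Mv y + e * (\<Sum>z\<in>P. v z)"
      unfolding Mv_def by (simp add: algebra_simps sum.distrib sum_distrib_left)
    finally show ?thesis using s0 by simp
  qed
  have three: "(\<Sum>x\<in>P. (Mv x)^2) = c^2 * (\<Sum>x\<in>P. v x * Mv x)"
  proof -
    have "(\<Sum>x\<in>P. (Mv x)^2) = (\<Sum>x\<in>P. \<Sum>y\<in>P. Mv x * M x y * v y)"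
      unfolding power2_eq_square by (subst (2) Mv_def) (simp add: sum_distrib_left mult.assoc)
    also have "\<dots> = (\<Sum>y\<in>P. \<Sum>x\<in>P. Mv x * M x y * v y)" by (rule sum.swap)
    also have "\<dots> = (\<Sum>y\<in>P. v y * (\<Sum>x\<in>P. M y x * Mv x))"
      by (intro sum.cong refl) (simp add: sum_distrib_left Msym mult_ac)
    also have "\<dots> = (\<Sum>y\<in>P. v y * (c^2 * Mv y))"
      by (intro sum.cong refl) (simp add: two)
    finally show ?thesis by (simp add: sum_distrib_left mult_ac)
  qed
  define \<alpha> where "\<alpha> = (\<Sum>x\<in>P. v x * Mv x)"
  have a0: "\<alpha> \<ge> 0" unfolding \<alpha>_def one by (intro sum_nonneg) simp
  have "0 \<le> (\<Sum>x\<in>P. (Mv x - c^2 * v x)^2)" by (intro sum_nonneg) simp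
  also have "\<dots> = (\<Sum>x\<in>P. (Mv x)^2) - 2 * c^2 * \<alpha> + c^4 * N"
    unfolding \<alpha>_def N_def power2_diff
    by (simp add: sum.distrib sum_subtractf sum_distrib_left algebra_simps power_mult_distrib)
  finally have "0 \<le> c^2 * (c^2 * N - \<alpha>)" using three unfolding \<alpha>_def by (simp add: algebra_simps)
  then have a_le: "\<alpha> \<le> c^2 * N" using c by (simp add: zero_le_mult_iff)
  have "0 \<le> (\<Sum>x\<in>P. (Av x + c * v x)^2)" by (intro sum_nonneg) simp
  also have "\<dots> = \<alpha> + 2 * c * (\<Sum>x\<in>P. v x * Av x) + c^2 * N"
    unfolding \<alpha>_def one N_def power2_sum
    by (simp add: sum.distrib sum_distrib_left algebra_simps power_mult_distrib)
  finally have "0 \<le> 2 * c * ((\<Sum>x\<in>P. v x * Av x) + c * N)" using a_le by (simp add: algebra_simps power2_eq_square)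
  then have "(\<Sum>x\<in>P. v x * Av x) + c * N \<ge> 0" using c by (simp add: zero_le_mult_iff)
  then show ?thesis unfolding Av_def N_def by simp
qed

lemma indep_quadratic:
  fixes P S :: "'p set" and A :: "'p \<Rightarrow> 'p \<Rightarrow> real" and c e r :: real
  assumes fin: "finite P" and sym: "\<And>x y. x\<in>P \<Longrightarrow> y\<in>P \<Longrightarrow> A x y = A y x"
  and M4: "\<And>x z. x\<in>P \<Longrightarrow> z\<in>P \<Longrightarrow> (\<Sum>y\<in>P. (\<Sum>w\<in>P. A x w * A w y) * (\<Sum>w\<in>P. A y w * A w z))
             = c^2 * (\<Sum>w\<in>P. A x w * A w z) + e"
  and c: "c > 0" and rows: "\<And>x. x\<in>P \<Longrightarrow> (\<Sum>y\<in>P. A x y) = r"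
  and SP: "S \<subseteq> P" and n0: "card P > 0"
  shows "(\<Sum>x\<in>S. \<Sum>y\<in>S. A x y) - r * (card S)^2 / card P \<ge> - c * (card S - (card S)^2 / card P)"
proof -
  define n where "n = real (card P)"
  define s where "s = real (card S)"
  define t where "t = s / n"
  have n: "n > 0" using n0 unfolding n_def by simp
  define v where "v x = of_bool (x \<in> S) - t" for x
  have PS: "P \<inter> {x. x \<in> S} = S" using SP by auto
  have restr1: "(\<Sum>y\<in>P. f y * (of_bool (y \<in> S) :: real)) = (\<Sum>y\<in>S. f y)" for f
  proof -
    have "(\<Sum>y\<in>P. f y * (of_bool (y \<in> S) :: real)) = (\<Sum>y\<in>P. if y \<in> S then f y else 0)"
      by (intro sum.cong refl) simp
    also have "\<dots> = sum f (P \<inter> S)" by (rule sum.inter_restrict[OF fin, symmetric])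
    finally show ?thesis using SP by (simp add: Int_absorb1)
  qed
  have restr2: "(\<Sum>y\<in>P. (of_bool (y \<in> S) :: real) * f y) = (\<Sum>y\<in>S. f y)" for f
    using restr1[of f] by (simp add: mult.commute)
  have chi: "(\<Sum>x\<in>P. (of_bool (x \<in> S) :: real)) = s" using fin PS unfolding s_def by simp
  have s0: "(\<Sum>x\<in>P. v x) = 0"
    unfolding v_def using chi n by (simp add: sum_subtractf t_def n_def)
  have N: "(\<Sum>x\<in>P. (v x)^2) = s - s^2 / n"
  proof -
    have "(\<Sum>x\<in>P. (v x)^2) = (\<Sum>x\<in>P. (1 - 2 * t) * of_bool (x \<in> S) + t^2)"
      unfolding v_def by (intro sum.cong refl) (simp add: power2_eq_square algebra_simps)
    also have "\<dots> = (1 - 2*t) * s + t^2 * n"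
      by (simp add: sum.distrib sum_distrib_left[symmetric] chi n_def)
    finally show ?thesis using n by (simp add: t_def power2_eq_square field_simps)
  qed
  define B where "B x = (\<Sum>y\<in>S. A x y)" for x
  have Av: "(\<Sum>y\<in>P. A x y * v y) = B x - t * r" if "x \<in> P" for x
  proof -
    have "(\<Sum>y\<in>P. A x y * v y) = (\<Sum>y\<in>P. A x y * of_bool (y \<in> S)) - t * (\<Sum>y\<in>P. A x y)"
      unfolding v_def by (simp add: algebra_simps sum_subtractf sum_distrib_left)
    then show ?thesis using rows[OF that] restr1 unfolding B_def by simp
  qed
  have sumB: "(\<Sum>x\<in>P. B x) = r * s"
  proof -
    have "(\<Sum>x\<in>P. B x) = (\<Sum>y\<in>S. \<Sum>x\<in>P. A x y)" unfolding B_def by (rule sum.swap)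
    also have "\<dots> = (\<Sum>y\<in>S. r)"
      by (intro sum.cong refl) (use SP sym rows in \<open>auto intro: trans[OF sum.cong[OF refl]]\<close>)
    finally show ?thesis unfolding s_def by simp
  qed
  have Q: "(\<Sum>x\<in>P. v x * (\<Sum>y\<in>P. A x y * v y)) = (\<Sum>x\<in>S. B x) - r * s^2 / n"
  proof -
    have "(\<Sum>x\<in>P. v x * (\<Sum>y\<in>P. A x y * v y)) = (\<Sum>x\<in>P. v x * (B x - t * r))"
      by (intro sum.cong refl) (simp add: Av)
    also have "\<dots> = (\<Sum>x\<in>P. of_bool (x \<in> S) * B x) - t * r * (\<Sum>x\<in>P. of_bool (x \<in> S))
                     - t * (\<Sum>x\<in>P. B x) + t^2 * r * n"
      unfolding v_def by (simp add: algebra_simps sum_subtractf sum.distrib sum_distrib_left n_def power2_eq_square)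
    also have "\<dots> = (\<Sum>x\<in>S. B x) - r * s^2 / n"
      using restr2 chi sumB n by (simp add: t_def power2_eq_square field_simps)
    finally show ?thesis .
  qed
  have "(\<Sum>x\<in>P. v x * (\<Sum>y\<in>P. A x y * v y)) \<ge> - c * (\<Sum>x\<in>P. (v x)^2)"
    by (rule spectral[OF fin sym M4 c s0])
  then show ?thesis unfolding Q N B_def s_def n_def by simp
qed


lemma final_algebra:
  fixes q s a c :: real
  assumes q: "q \<ge> 2" and c: "c = sqrt (2*q)"
    and h: "a - (q+1) * s^2 / (q^3+q^2+q+1) \<ge> - c * (s - s^2 / (q^3+q^2+q+1))"
    and a: "a \<le> q^2 + 1"
  shows "s \<le> (sqrt (2*q) + sqrt (2*q + 4*(q^2+1)*((q + sqrt (2*q) + 1) / (q^3 + q^2 + q + 1))))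
              / (2*((q + sqrt (2*q) + 1) / (q^3 + q^2 + q + 1)))"
proof -
  define n where "n = q^3+q^2+q+1"
  have n: "n > 0" unfolding n_def using q by (simp add: add_pos_pos)
  define k where "k = (q + c + 1) / n"
  have q0: "0 \<le> q" using q by simp
  have c0: "c \<ge> 0" unfolding c using q0 by simp
  have c2: "c^2 = 2*q" unfolding c using q0 by simp
  have k: "k > 0" unfolding k_def using n c0 q by (simp add: add_nonneg_pos)
  have "a - (q+1) * s^2 / n \<ge> - c * (s - s^2 / n)" using h unfolding n_def .
  then have "(q+1) * s^2 / n + c * s^2 / n - c * s \<le> a" by (simp add: algebra_simps)
  moreover have "k * s^2 = (q+1) * s^2 / n + c * s^2 / n" unfolding k_def using n by (simp add: field_simps)
  ultimately have "k * s^2 - c * s \<le> q^2 + 1" using a by linarith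
  then have m: "4 * k * (k * s^2 - c * s) \<le> 4 * k * (q^2 + 1)" using k by simp
  have e: "(2 * k * s - c)^2 = 4 * k * (k * s^2 - c * s) + c^2" by (simp add: power2_eq_square algebra_simps)
  have "(2 * k * s - c)^2 \<le> c^2 + 4*(q^2+1)*k" unfolding e using m by (simp add: algebra_simps)
  then have "2 * k * s - c \<le> sqrt (c^2 + 4*(q^2+1)*k)" by (rule real_le_rsqrt)
  then have "s \<le> (c + sqrt (c^2 + 4*(q^2+1)*k)) / (2*k)" using k by (simp add: field_simps)
  then show ?thesis unfolding Let_def k_def n_def c2 using c by simp
qed


context
  fixes \<sigma> :: "('a::{field,finite} ^ 4) set \<Rightarrow> ('a ^ 4) set"
  assumes pol: "is_polarity \<sigma>"
begin

lemma bijPL: "bij_betw \<sigma> W_points W_lines" and bijLP: "bij_betw \<sigma> W_lines W_points"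
  and inv: "\<And>x. x \<in> W_points \<union> W_lines \<Longrightarrow> \<sigma> (\<sigma> x) = x"
  and inc: "\<And>p l. p \<in> W_points \<Longrightarrow> l \<in> W_lines \<Longrightarrow> p \<subseteq> l \<longleftrightarrow> \<sigma> l \<subseteq> \<sigma> p"
  using pol unfolding is_polarity_def by auto

lemma sigP: "x \<in> W_points \<Longrightarrow> \<sigma> x \<in> W_lines" using bijPL by (auto dest: bij_betwE)
lemma sigL: "l \<in> W_lines \<Longrightarrow> \<sigma> l \<in> W_points" using bijLP by (auto dest: bij_betwE)

lemma adj_sym: "x \<in> W_points \<Longrightarrow> y \<in> W_points \<Longrightarrow> x \<subseteq> \<sigma> y \<longleftrightarrow> y \<subseteq> \<sigma> x"
  using inc[of x "\<sigma> y"] sigP inv[of y] by simp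

lemma card_adj:
  assumes "x \<in> W_points" "z \<in> W_points"
  shows "card {y \<in> W_points. x \<subseteq> \<sigma> y \<and> z \<subseteq> \<sigma> y} = card {l \<in> W_lines. x \<subseteq> l \<and> z \<subseteq> l}"
proof -
  define Y where "Y = {y \<in> W_points. x \<subseteq> \<sigma> y \<and> z \<subseteq> \<sigma> y}"
  have eq: "\<sigma> ` Y = {l \<in> W_lines. x \<subseteq> l \<and> z \<subseteq> l}"
  proof
    show "\<sigma> ` Y \<subseteq> {l \<in> W_lines. x \<subseteq> l \<and> z \<subseteq> l}"
    proof
      fix l assume "l \<in> \<sigma> ` Y"
      then obtain y where y: "y \<in> Y" "l = \<sigma> y" by blast
      have "\<sigma> y \<in> W_lines" using y(1) sigP unfolding Y_def by blast
      then show "l \<in> {l \<in> W_lines. x \<subseteq> l \<and> z \<subseteq> l}" using y unfolding Y_def by blast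
    qed
    show "{l \<in> W_lines. x \<subseteq> l \<and> z \<subseteq> l} \<subseteq> \<sigma> ` Y"
    proof
      fix l assume l: "l \<in> {l \<in> W_lines. x \<subseteq> l \<and> z \<subseteq> l}"
      have "l \<in> \<sigma> ` W_points" using l bijPL by (simp add: bij_betw_def)
      then obtain y where y: "y \<in> W_points" "l = \<sigma> y" by blast
      then have "y \<in> Y" using l unfolding Y_def by blast
      then show "l \<in> \<sigma> ` Y" using y(2) by blast
    qed
  qed
  have "inj_on \<sigma> W_points" using bijPL by (simp add: bij_betw_def)
  then have "inj_on \<sigma> Y" by (rule inj_on_subset) (simp add: Y_def)
  then have "card (\<sigma> ` Y) = card Y" by (rule card_image)
  then show ?thesis using eq unfolding Y_def by simp
qed

lemma no_abs_collinear:
  assumes x: "x \<in> W_points" and y: "y \<in> W_points" and xy: "x \<noteq> y"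
    and ax: "x \<subseteq> \<sigma> x" and ay: "y \<subseteq> \<sigma> y"
    and l: "l \<in> W_lines" and xl: "x \<subseteq> l" and yl: "y \<subseteq> l"
  shows False
proof -
  define p where "p = \<sigma> l"
  have p: "p \<in> W_points" unfolding p_def using sigL l by simp
  have px: "p \<subseteq> \<sigma> x" using inc[OF x l] xl unfolding p_def by simp
  have py: "p \<subseteq> \<sigma> y" using inc[OF y l] yl unfolding p_def by simp
  have sx: "\<sigma> x \<in> W_lines" "\<sigma> y \<in> W_lines" using sigP x y by auto
  have ll: "\<sigma> p = l" unfolding p_def using inv l by simp
  show False
  proof (cases "p = x")
    case True
    have "l = \<sigma> x" using ll True by simp
    then have "y \<subseteq> \<sigma> x" using yl by simp
    have "\<sigma> y = l" using line_unique[OF x y xy sx(2) l] True py ay xl yl by simp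
    then have "\<sigma> x = \<sigma> y" using \<open>l = \<sigma> x\<close> by simp
    then have "\<sigma> (\<sigma> x) = \<sigma> (\<sigma> y)" by (rule arg_cong)
    moreover have "\<sigma> (\<sigma> x) = x" "\<sigma> (\<sigma> y) = y" using inv x y by auto
    ultimately have "x = y" by simp
    then show False using xy by simp
  next
    case pnx: False
    show False
    proof (cases "p = y")
      case True
      have "l = \<sigma> y" using ll True by simp
      have "\<sigma> x = l" using line_unique[OF x y xy sx(1) l] True px ax xl yl by simp
      then have "\<sigma> x = \<sigma> y" using \<open>l = \<sigma> y\<close> by simp
      then have "\<sigma> (\<sigma> x) = \<sigma> (\<sigma> y)" by (rule arg_cong)
    moreover have "\<sigma> (\<sigma> x) = x" "\<sigma> (\<sigma> y) = y" using inv x y by auto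
    ultimately have "x = y" by simp
      then show False using xy by simp
    next
      case pny: False
      have "perp x p" using line_perp[OF sx(1) ax px] .
      moreover have "perp y p" using line_perp[OF sx(2) ay py] .
      ultimately have pin: "p \<in> {w \<in> W_points. perp x w \<and> perp y w}" using p by simp
      have sub: "{w \<in> W_points. w \<subseteq> l} \<subseteq> {w \<in> W_points. perp x w \<and> perp y w}"
        using line_perp[OF l] xl yl by blast
      have "card {w \<in> W_points. w \<subseteq> l} = card {w \<in> W_points. perp x w \<and> perp y w}"
        using card_line_points[OF l] card_perp2[OF x y xy] by simp
      then have "{w \<in> W_points. w \<subseteq> l} = {w \<in> W_points. perp x w \<and> perp y w}"
        using sub by (intro card_subset_eq) auto
      then have "p \<subseteq> l" using pin by blast
      have "l = \<sigma> x" using line_unique[OF p x pnx l sx(1)] \<open>p \<subseteq> l\<close> xl px ax by simp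
      then have "p = x" using inv x unfolding p_def by simp
      then show False using pnx by simp
    qed
  qed
qed

lemma card_abs: "card {x \<in> (W_points :: ('a^4) set set). x \<subseteq> \<sigma> x} \<le> CARD('a)^2 + 1"
proof -
  let ?q = "CARD('a)"
  define Ab where "Ab = {x \<in> (W_points :: ('a^4) set set). x \<subseteq> \<sigma> x}"
  define T where "T x = {l \<in> (W_lines :: ('a^4) set set). x \<subseteq> l}" for x
  have disj: "\<forall>i\<in>Ab. \<forall>j\<in>Ab. i \<noteq> j \<longrightarrow> T i \<inter> T j = {}"
  proof (intro ballI impI equalityI subsetI)
    fix i j l assume ij: "i \<in> Ab" "j \<in> Ab" "i \<noteq> j" and "l \<in> T i \<inter> T j"
    then show "l \<in> {}" using no_abs_collinear[of i j l] unfolding Ab_def T_def by simp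
  qed simp
  have "card (\<Union>(T ` Ab)) = (\<Sum>i\<in>Ab. card (T i))"
    by (rule card_UN_disjoint) (use disj in auto)
  also have "\<dots> = card Ab * (?q + 1)"
    unfolding Ab_def T_def by (simp add: card_lines_through)
  finally have e: "card (\<Union>(T ` Ab)) = card Ab * (?q + 1)" .
  have "card (\<Union>(T ` Ab)) \<le> card (W_lines :: ('a^4) set set)"
    by (rule card_mono) (auto simp: T_def)
  also have "\<dots> = card (W_points :: ('a^4) set set)" using bijPL by (simp add: bij_betw_same_card)
  also have "\<dots> = (?q^2 + 1) * (?q + 1)" using card_points by (simp add: algebra_simps power2_eq_square power3_eq_cube)
  finally have "card Ab * (?q + 1) \<le> (?q^2 + 1) * (?q + 1)" using e by simp
  then have "card Ab \<le> ?q^2 + 1" using mult_le_cancel2[of "card Ab" "?q + 1" "?q^2 + 1"] by simp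
  then show ?thesis unfolding Ab_def .
qed

end


theorem mainTheorem11:
  fixes \<sigma> :: "('a::{field,finite} ^ 4) set \<Rightarrow> ('a ^ 4) set"
    and S :: "('a ^ 4) set set"
  assumes "is_polarity \<sigma>"
    and "polarity_independent \<sigma> S"
  shows "let q = real CARD('a); k = (q + sqrt (2*q) + 1) / (q^3 + q^2 + q + 1) in
         real (card S) \<le> (sqrt (2*q) + sqrt (2*q + 4*(q^2+1)*k)) / (2*k)"
proof -
  note pol = assms(1)
  let ?q = "CARD('a)"
  let ?P = "W_points :: ('a^4) set set"
  have SP: "S \<subseteq> ?P" and ind: "\<And>x y. x \<in> S \<Longrightarrow> y \<in> S \<Longrightarrow> x \<noteq> y \<Longrightarrow> \<not> x \<subseteq> \<sigma> y"
    using assms(2) unfolding polarity_independent_def polarity_adj_def by auto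
  define A where "A x y = (of_bool (x \<subseteq> \<sigma> y) :: real)" for x y
  have sym: "A x y = A y x" if "x \<in> ?P" "y \<in> ?P" for x y
    unfolding A_def using adj_sym[OF pol that] by simp
  have rows: "(\<Sum>y\<in>?P. A x y) = real ?q + 1" if x: "x \<in> ?P" for x
  proof -
    have "(\<Sum>y\<in>?P. A x y) = real (card (?P \<inter> {y. x \<subseteq> \<sigma> y}))" unfolding A_def by simp
    also have "?P \<inter> {y. x \<subseteq> \<sigma> y} = {y \<in> ?P. x \<subseteq> \<sigma> y \<and> x \<subseteq> \<sigma> y}" by auto
    also have "card \<dots> = card {l \<in> W_lines. x \<subseteq> l \<and> x \<subseteq> l}" by (rule card_adj[OF pol x x])
    also have "{l \<in> W_lines. x \<subseteq> l \<and> x \<subseteq> l} = {l \<in> W_lines. x \<subseteq> l}" by simp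
    finally show ?thesis using card_lines_through[OF x] by simp
  qed
  have Mval: "(\<Sum>w\<in>?P. A x w * A w z) = real ?q * of_bool (x = z) + of_bool (perp x z)"
    if x: "x \<in> ?P" and z: "z \<in> ?P" for x z
  proof -
    have "(\<Sum>w\<in>?P. A x w * A w z) = (\<Sum>w\<in>?P. of_bool (x \<subseteq> \<sigma> w \<and> z \<subseteq> \<sigma> w))"
    proof (intro sum.cong refl)
      fix w assume w: "w \<in> ?P"
      have "w \<subseteq> \<sigma> z \<longleftrightarrow> z \<subseteq> \<sigma> w" using adj_sym[OF pol w z] .
      then show "A x w * A w z = of_bool (x \<subseteq> \<sigma> w \<and> z \<subseteq> \<sigma> w)" by (simp add: A_def)
    qed
    also have "\<dots> = real (card (?P \<inter> {w. x \<subseteq> \<sigma> w \<and> z \<subseteq> \<sigma> w}))" by simp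
    also have "?P \<inter> {w. x \<subseteq> \<sigma> w \<and> z \<subseteq> \<sigma> w} = {w \<in> ?P. x \<subseteq> \<sigma> w \<and> z \<subseteq> \<sigma> w}" by auto
    also have "card \<dots> = card {l \<in> W_lines. x \<subseteq> l \<and> z \<subseteq> l}" by (rule card_adj[OF pol x z])
    finally show ?thesis using card_lines2[OF x z] by simp
  qed
  define c where "c = sqrt (2 * real ?q)"
  have c2: "c^2 = 2 * real ?q" unfolding c_def by simp
  have c0: "c > 0" unfolding c_def using q_ge2[where 'a='a] by simp
  have M4: "(\<Sum>y\<in>?P. (\<Sum>w\<in>?P. A x w * A w y) * (\<Sum>w\<in>?P. A y w * A w z))
             = c^2 * (\<Sum>w\<in>?P. A x w * A w z) + (real ?q + 1)" if x: "x \<in> ?P" and z: "z \<in> ?P" for x z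
  proof -
    have "(\<Sum>y\<in>?P. (\<Sum>w\<in>?P. A x w * A w y) * (\<Sum>w\<in>?P. A y w * A w z))
       = (\<Sum>y\<in>?P. (real ?q * of_bool (x = y) + of_bool (perp x y)) * (real ?q * of_bool (y = z) + of_bool (perp y z)))"
      by (intro sum.cong refl) (simp add: Mval x z)
    also have "\<dots> = 2 * real ?q * (real ?q * of_bool (x = z) + of_bool (perp x z)) + (real ?q + 1)"
      by (rule mm_square[OF x z])
    finally show ?thesis using Mval[OF x z] c2 by simp
  qed
  have nP: "card ?P > 0" using card_points[where 'a='a] by simp
  have main: "(\<Sum>x\<in>S. \<Sum>y\<in>S. A x y) - (real ?q + 1) * (card S)^2 / card ?P \<ge> - c * (card S - (card S)^2 / card ?P)"
    by (rule indep_quadratic[OF _ sym M4 c0 rows SP nP]) simp_all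
  have inner: "(\<Sum>y\<in>S. A x y) = of_bool (x \<subseteq> \<sigma> x)" if x: "x \<in> S" for x
  proof -
    have "(\<Sum>y\<in>S. A x y) = (\<Sum>y\<in>S. if y = x then of_bool (x \<subseteq> \<sigma> x) else 0)"
      by (intro sum.cong refl) (use ind x in \<open>auto simp: A_def\<close>)
    also have "\<dots> = of_bool (x \<subseteq> \<sigma> x)" using x by simp
    finally show ?thesis .
  qed
  have "(\<Sum>x\<in>S. \<Sum>y\<in>S. A x y) = (\<Sum>x\<in>S. of_bool (x \<subseteq> \<sigma> x))" by (intro sum.cong refl) (simp add: inner)
  also have "\<dots> = real (card (S \<inter> {x. x \<subseteq> \<sigma> x}))" by simp
  also have "\<dots> \<le> real (card {x \<in> ?P. x \<subseteq> \<sigma> x})"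
    using SP by (intro of_nat_mono card_mono) auto
  also have "\<dots> \<le> real (?q^2 + 1)" using card_abs[OF pol] by (simp only: of_nat_le_iff)
  finally have a: "(\<Sum>x\<in>S. \<Sum>y\<in>S. A x y) \<le> real ?q ^ 2 + 1" by simp
  have cP: "real (card ?P) = real ?q ^ 3 + real ?q ^ 2 + real ?q + 1" using card_points[where 'a='a] by simp
  have q2: "real ?q \<ge> 2" using q_ge2[where 'a='a] by simp
  show ?thesis unfolding Let_def
    by (rule final_algebra[OF q2 c_def _ a]) (use main in \<open>simp add: cP\<close>)
qed

end
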